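(* Let $q$ be a prime power and $n\ge2$. Let $G$ be the group of $(n+1)\times(n+1)$ matrices over $\mathbb{F}_q[t]$ generated by $\{e_{i,i+1}(a+bt):a,b\in\mathbb{F}_q,1\le i\le n\}$, and for $0\le i\le n-1$ let $K_{\{i\}}=\langle e_{j,j+1}(a+bt):j\in\{1,\dots,n\}\setminus\{i+1\},a,b\in\mathbb{F}_q\rangle$. Then the subgroups $K_{\{0\}},\dots,K_{\{n-1\}}$ boundedly generate $G$, and $$\max_{g\in G}\min\{l: g=g_1\cdots g_l,\ g_1,\dots,g_l\in\textstyle\bigcup_iK_{\{i\}}\}\le 2+4(n+1).$$
   Context: $e_{i,j}(r)$ is the $(n+1)\times(n+1)$ matrix with $1$'s on the diagonal, $r$ in entry $(i,j)$ and $0$ elsewhere. Equivalently, $A\in G$ iff $A$ is upper triangular with $1$'s on the diagonal and, for $i<j$, $A(i,j)$ is a polynomial in $t$ over $\mathbb{F}_q$ of degree $\le j-i$. Subgroups boundedly generate $G$ if some fixed $L$ bounds the number of factors from their union needed to write every element of $G$. *)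

theory Defs
  imports "HOL-Computational_Algebra.Polynomial"
begin

text \<open>(n+1) x (n+1) matrices over a ring R are represented as functions
  nat \<Rightarrow> nat \<Rightarrow> R, with rows/columns indexed by {1..n+1}; entries outside
  this index range are irrelevant and are normalised to 0 by the operations.\<close>

type_synonym 'r mat = "nat \<Rightarrow> nat \<Rightarrow> 'r"

definition mid :: "nat \<Rightarrow> 'r::comm_ring_1 mat" where
  "mid n = (\<lambda>i j. if i \<in> {1..n+1} \<and> i = j then 1 else 0)"

definition mmul :: "nat \<Rightarrow> 'r::comm_ring_1 mat \<Rightarrow> 'r mat \<Rightarrow> 'r mat" where
  "mmul n A B = (\<lambda>i j. if i \<in> {1..n+1} \<and> j \<in> {1..n+1}
                      then (\<Sum>k\<in>{1..n+1}. A i k * B k j) else 0)"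

definition elem :: "nat \<Rightarrow> nat \<Rightarrow> nat \<Rightarrow> 'r::comm_ring_1 \<Rightarrow> 'r mat" where
  "elem n i j r = (\<lambda>a b. if a = i \<and> b = j then r else mid n a b)"

text \<open>Subgroup generated by a set S of (n+1)x(n+1) matrices: the monoid
  generated by S together with the (two-sided) inverses of elements of S.\<close>
inductive_set gen_group :: "nat \<Rightarrow> 'r::comm_ring_1 mat set \<Rightarrow> 'r mat set"
  for n :: nat and S :: "'r mat set" where
  gen_one: "mid n \<in> gen_group n S"
| gen_mul: "s \<in> S \<Longrightarrow> g \<in> gen_group n S \<Longrightarrow> mmul n s g \<in> gen_group n S"
| gen_inv: "s \<in> S \<Longrightarrow> mmul n s' s = mid n \<Longrightarrow> mmul n s s' = mid n
            \<Longrightarrow> g \<in> gen_group n S \<Longrightarrow> mmul n s' g \<in> gen_group n S"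

definition mprod :: "nat \<Rightarrow> 'r::comm_ring_1 mat list \<Rightarrow> 'r mat" where
  "mprod n gs = foldr (mmul n) gs (mid n)"

definition Ggrp :: "nat \<Rightarrow> ('a::field) poly mat set" where
  "Ggrp n = gen_group n {elem n i (i+1) [:a, b:] | i a b. 1 \<le> i \<and> i \<le> n}"

definition Ksub :: "nat \<Rightarrow> nat \<Rightarrow> ('a::field) poly mat set" where
  "Ksub n i = gen_group n {elem n j (j+1) [:a, b:] | j a b. j \<in> {1..n} - {i+1}}"

end

theory Submission
  imports Defs
begin

definition nz :: "nat \<Rightarrow> 'r::comm_ring_1 mat \<Rightarrow> 'r mat" where
  "nz n A = (\<lambda>i j. if i \<in> {1..n+1} \<and> j \<in> {1..n+1} then A i j else 0)"

lemma mmul_assoc: "mmul n (mmul n A B) C = mmul n A (mmul n B C)"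
proof (rule ext, rule ext)
  fix i j
  show "mmul n (mmul n A B) C i j = mmul n A (mmul n B C) i j"
  proof (cases "i \<in> {1..n+1} \<and> j \<in> {1..n+1}")
    case True
    have "mmul n (mmul n A B) C i j = (\<Sum>k\<in>{1..n+1}. (\<Sum>m\<in>{1..n+1}. A i m * B m k) * C k j)"
      using True unfolding mmul_def by (auto intro!: sum.cong)
    also have "\<dots> = (\<Sum>k\<in>{1..n+1}. \<Sum>m\<in>{1..n+1}. A i m * B m k * C k j)"
      by (simp only: sum_distrib_right)
    also have "\<dots> = (\<Sum>m\<in>{1..n+1}. \<Sum>k\<in>{1..n+1}. A i m * B m k * C k j)"
      by (rule sum.swap)
    also have "\<dots> = (\<Sum>m\<in>{1..n+1}. A i m * (\<Sum>k\<in>{1..n+1}. B m k * C k j))"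
      by (simp only: sum_distrib_left mult.assoc)
    also have "\<dots> = mmul n A (mmul n B C) i j"
      using True unfolding mmul_def by (auto intro!: sum.cong)
    finally show ?thesis .
  qed (auto simp: mmul_def)
qed

lemma mmul_mid_left: "mmul n (mid n) B = nz n B"
proof (rule ext, rule ext)
  fix i j
  show "mmul n (mid n) B i j = nz n B i j"
  proof (cases "i \<in> {1..n+1} \<and> j \<in> {1..n+1}")
    case True
    have "(\<Sum>k\<in>{1..n+1}. mid n i k * B k j) = (\<Sum>k\<in>{1..n+1}. if k = i then B i j else 0)"
      using True by (intro sum.cong) (auto simp: mid_def)
    then show ?thesis using True by (simp add: mmul_def nz_def)
  qed (auto simp: mmul_def nz_def)
qed

lemma mmul_mid_right: "mmul n A (mid n) = nz n A"
proof (rule ext, rule ext)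
  fix i j
  show "mmul n A (mid n) i j = nz n A i j"
  proof (cases "i \<in> {1..n+1} \<and> j \<in> {1..n+1}")
    case True
    have "(\<Sum>k\<in>{1..n+1}. A i k * mid n k j) = (\<Sum>k\<in>{1..n+1}. if k = j then A i j else 0)"
      using True by (intro sum.cong) (auto simp: mid_def)
    then show ?thesis using True by (simp add: mmul_def nz_def)
  qed (auto simp: mmul_def nz_def)
qed

lemma nz_mmul[simp]: "nz n (mmul n A B) = mmul n A B"
  by (auto simp: nz_def mmul_def fun_eq_iff)

lemma nz_mid[simp]: "nz n (mid n) = mid n"
  by (auto simp: nz_def mid_def fun_eq_iff)

lemma mmul_nz_left: "mmul n (nz n A) B = mmul n A B"
  unfolding mmul_def nz_def by (intro ext) (auto intro!: sum.cong)

lemma nz_elem[simp]: "i \<in> {1..n+1} \<Longrightarrow> j \<in> {1..n+1} \<Longrightarrow> nz n (elem n i j r) = elem n i j r"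
  by (auto simp: nz_def elem_def mid_def fun_eq_iff)

lemma rowop:
  assumes "i \<in> {1..n+1}" "j \<in> {1..n+1}" "i \<noteq> j"
  shows "mmul n (elem n i j a) B = (\<lambda>x y. if x \<in> {1..n+1} \<and> y \<in> {1..n+1} then
            (if x = i then B i y + a * B j y else B x y) else 0)"
proof (rule ext, rule ext)
  fix x y
  show "mmul n (elem n i j a) B x y = (if x \<in> {1..n+1} \<and> y \<in> {1..n+1} then
            (if x = i then B i y + a * B j y else B x y) else 0)"
  proof (cases "x \<in> {1..n+1} \<and> y \<in> {1..n+1}")
    case True
    show ?thesis
    proof (cases "x = i")
      case xi: True
      have "(\<Sum>k\<in>{1..n+1}. elem n i j a x k * B k y) =
            (\<Sum>k\<in>{1..n+1}. (if k = j then a * B j y else 0) + (if k = i then B i y else 0))"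
        using True xi assms by (intro sum.cong) (auto simp: elem_def mid_def)
      also have "\<dots> = a * B j y + B i y" using assms by (simp add: sum.distrib)
      finally show ?thesis using True xi by (simp add: mmul_def add.commute)
    next
      case xi: False
      have "(\<Sum>k\<in>{1..n+1}. elem n i j a x k * B k y) =
            (\<Sum>k\<in>{1..n+1}. (if k = x then B x y else 0))"
        using True xi assms by (intro sum.cong) (auto simp: elem_def mid_def)
      then show ?thesis using True xi by (simp add: mmul_def)
    qed
  qed (auto simp: mmul_def)
qed

lemma gg_nz: "g \<in> gen_group n S \<Longrightarrow> nz n g = g"
  by (induction rule: gen_group.induct) auto

lemma gg_mult: "g \<in> gen_group n S \<Longrightarrow> h \<in> gen_group n S \<Longrightarrow> mmul n g h \<in> gen_group n S"
proof (induction rule: gen_group.induct)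
  case gen_one
  then show ?case by (simp add: mmul_mid_left gg_nz)
next
  case (gen_mul s g)
  then show ?case by (simp add: mmul_assoc gen_group.gen_mul)
next
  case (gen_inv s s' g)
  then show ?case by (simp add: mmul_assoc gen_group.gen_inv)
qed

lemma gg_gen: "s \<in> S \<Longrightarrow> nz n s = s \<Longrightarrow> s \<in> gen_group n S"
  using gen_group.gen_mul[OF _ gen_group.gen_one, of s S n] by (simp add: mmul_mid_right)

lemma elem_add:
  assumes "i \<in> {1..n+1}" "j \<in> {1..n+1}" "i \<noteq> j"
  shows "elem n i j (x + y) = mmul n (elem n i j x) (elem n i j y)"
  unfolding rowop[OF assms] using assms by (auto simp: elem_def mid_def fun_eq_iff)

lemma elem_comm:
  assumes "i \<in> {1..n+1}" "j \<in> {1..n+1}" "k \<in> {1..n+1}" "i \<noteq> j" "i \<noteq> k" "k \<noteq> j"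
  shows "elem n i j (a * b) = mmul n (elem n i k a) (mmul n (elem n k j b)
           (mmul n (elem n i k (-a)) (elem n k j (-b))))"
  unfolding rowop[OF assms(1,3,5)] rowop[OF assms(3,2,6)]
  using assms by (auto simp: elem_def mid_def fun_eq_iff algebra_simps)

lemma elem_inv:
  assumes "i \<in> {1..n+1}" "j \<in> {1..n+1}" "i \<noteq> j" "mmul n s' (elem n i j p) = mid n"
  shows "mmul n s' g = mmul n (elem n i j (-p)) g"
proof -
  have e0: "elem n i j (0::'a) = mid n" using assms by (auto simp: elem_def mid_def fun_eq_iff)
  have e: "mmul n (elem n i j p) (elem n i j (-p)) = mid n"
    using elem_add[OF assms(1-3), of p "-p"] e0 by simp
  have "nz n s' = mmul n s' (mmul n (elem n i j p) (elem n i j (-p)))"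
    by (simp add: e mmul_mid_right)
  also have "\<dots> = elem n i j (-p)"
    by (simp add: mmul_assoc[symmetric] assms(4) mmul_mid_left nz_elem[OF assms(1,2)])
  finally have "nz n s' = elem n i j (-p)" .
  then show ?thesis by (metis mmul_nz_left)
qed

definition chr :: "nat \<Rightarrow> nat \<Rightarrow> nat \<Rightarrow> ('a::field) poly mat \<Rightarrow> bool" where
  "chr n l m A \<longleftrightarrow> nz n A = A \<and> (\<forall>i\<in>{1..n+1}. A i i = 1)
     \<and> (\<forall>i j. i \<noteq> j \<and> A i j \<noteq> 0 \<longrightarrow> l \<le> i \<and> i < j \<and> j \<le> m)
     \<and> (\<forall>i j. degree (A i j) \<le> j - i)"

lemma chr_mid: "chr n l m (mid n)"
  unfolding chr_def nz_mid by (auto simp: mid_def)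

lemma chr_step:
  assumes "1 \<le> j" "j \<le> n" "degree p \<le> 1" "chr n 1 (n+1) g"
  shows "chr n 1 (n+1) (mmul n (elem n j (j+1) p) g)"
proof -
  have r: "mmul n (elem n j (j+1) p) g = (\<lambda>x y. if x \<in> {1..n+1} \<and> y \<in> {1..n+1} then
            (if x = j then g j y + p * g (j+1) y else g x y) else 0)"
    using assms by (intro rowop) auto
  have nzg: "nz n g = g" and dg: "\<forall>i\<in>{1..n+1}. g i i = 1"
    and sp: "\<And>i k. i \<noteq> k \<Longrightarrow> g i k \<noteq> 0 \<Longrightarrow> 1 \<le> i \<and> i < k \<and> k \<le> n+1"
    and dgr: "\<And>i k. degree (g i k) \<le> k - i"
    using assms(4) unfolding chr_def by blast+
  have g0: "g (j+1) j = 0" using sp[of "j+1" j] by auto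
  have dj: "degree (g j y + p * g (j+1) y) \<le> y - j" for y
  proof -
    have "degree (p * g (j+1) y) \<le> y - j"
    proof (cases "g (j+1) y = 0")
      case False
      then have "j + 1 \<le> y" using sp[of "j+1" y] by (cases "j+1 = y") auto
      moreover have "degree (p * g (j+1) y) \<le> degree p + degree (g (j+1) y)" by (rule degree_mult_le)
      ultimately show ?thesis using dgr[of "j+1" y] assms(3) by linarith
    qed simp
    then show ?thesis using dgr[of j y] by (intro degree_add_le) auto
  qed
  have spj: "j < y" if "y \<noteq> j" "g j y + p * g (j+1) y \<noteq> 0" for y
  proof (cases "g j y = 0")
    case True
    then have "g (j+1) y \<noteq> 0" using that by auto
    then show ?thesis using sp[of "j+1" y] by (cases "j+1 = y") auto
  next
    case False then show ?thesis using sp[of j y] that by auto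
  qed
  show ?thesis unfolding r chr_def
    apply (intro conjI)
    subgoal by (auto simp: nz_def fun_eq_iff)
    subgoal using dg g0 by auto
    subgoal
    proof (intro allI impI)
      fix x y
      assume h: "x \<noteq> y \<and> (if x \<in> {1..n+1} \<and> y \<in> {1..n+1} then (if x = j then g j y + p * g (j+1) y else g x y) else 0) \<noteq> 0"
      show "1 \<le> x \<and> x < y \<and> y \<le> n+1"
      proof (cases "x = j")
        case True
        then show ?thesis using h spj[of y] by (auto split: if_splits)
      next
        case False
        then show ?thesis using h sp[of x y] by (auto split: if_splits)
      qed
    qed
    subgoal
    proof (intro allI)
      fix x y
      show "degree (if x \<in> {1..n+1} \<and> y \<in> {1..n+1} then (if x = j then g j y + p * g (j+1) y else g x y) else 0) \<le> y - x"
        using dj[of y] dgr[of x y] by (cases "x = j") auto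
    qed
    done
qed

lemma G_chr:
  assumes "g \<in> gen_group n S"
    and "\<forall>s\<in>S. \<exists>j p. s = elem n j (j+1) p \<and> 1 \<le> j \<and> j \<le> n \<and> degree p \<le> 1"
  shows "chr n 1 (n+1) g"
  using assms(1)
proof (induction rule: gen_group.induct)
  case gen_one
  then show ?case by (rule chr_mid)
next
  case (gen_mul s g)
  then obtain j p where s: "s = elem n j (j+1) p" "1 \<le> j" "j \<le> n" "degree p \<le> 1"
    using assms(2) by blast
  then show ?case using chr_step[of j n p g] gen_mul by simp
next
  case (gen_inv s s' g)
  then obtain j p where s: "s = elem n j (j+1) p" "1 \<le> j" "j \<le> n" "degree p \<le> 1"
    using assms(2) by blast
  have "mmul n s' g = mmul n (elem n j (j+1) (-p)) g"
    using s gen_inv by (intro elem_inv) auto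
  then show ?case using chr_step[of j n "-p" g] s gen_inv by simp
qed

lemma deg1_eq: "degree (p::'a::field poly) \<le> 1 \<Longrightarrow> p = [:coeff p 0, coeff p 1:]"
proof (rule poly_eqI)
  fix k assume d: "degree p \<le> 1"
  show "coeff p k = coeff [:coeff p 0, coeff p 1:] k"
  proof (cases "k \<le> 1")
    case True
    then have "k = 0 \<or> k = 1" by auto
    then show ?thesis by auto
  next
    case False
    then obtain k' where "k = Suc (Suc k')" by (metis One_nat_def Suc_pred less_Suc_eq_0_disj not_le not_less_eq_eq)
    moreover have "coeff p k = 0" using d False by (intro coeff_eq_0) auto
    ultimately show ?thesis by simp
  qed
qed

definition clr :: "nat \<Rightarrow> nat \<Rightarrow> 'r::comm_ring_1 mat \<Rightarrow> 'r mat" where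
  "clr s m A = (\<lambda>x y. if y = m \<and> s \<le> x \<and> x < m then 0 else A x y)"

lemma strip1:
  assumes "nz n A = A" "s \<in> {1..n+1}" "m \<in> {1..n+1}" "s \<noteq> m" "\<forall>y. A m y = mid n m y"
  shows "A = mmul n (elem n s m (A s m)) (\<lambda>x y. if x = s \<and> y = m then 0 else A x y)"
proof -
  have out: "\<And>x y. \<not> (x \<in> {1..n+1} \<and> y \<in> {1..n+1}) \<Longrightarrow> A x y = 0"
    using assms(1) unfolding nz_def fun_eq_iff by metis
  show ?thesis unfolding rowop[OF assms(2,3,4)]
    using assms(4,5) out by (auto simp: fun_eq_iff mid_def)
qed

lemma colstrip_aux:
  assumes "m - s = k" "nz n A = A" "m \<in> {1..n+1}" "\<forall>y. A m y = mid n m y" "1 \<le> s"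
    "\<forall>x. s \<le> x \<and> x < m \<longrightarrow> elem n x m (A x m) \<in> gen_group n S"
  shows "\<exists>C \<in> gen_group n S. A = mmul n C (clr s m A)"
  using assms
proof (induction k arbitrary: s A)
  case 0
  then have "clr s m A = A" by (auto simp: clr_def fun_eq_iff)
  then show ?case using 0 by (intro bexI[of _ "mid n"]) (auto simp: mmul_mid_left intro: gen_one)
next
  case (Suc k)
  define A0 where "A0 = (\<lambda>x y. if x = s \<and> y = m then 0 else A x y)"
  have sm: "s < m" "s \<noteq> m" using Suc.prems by auto
  have eq: "A = mmul n (elem n s m (A s m)) A0"
    unfolding A0_def using Suc.prems sm by (intro strip1) auto
  have out: "\<And>x y. \<not> (x \<in> {1..n+1} \<and> y \<in> {1..n+1}) \<Longrightarrow> A x y = 0"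
    using Suc.prems(2) unfolding nz_def fun_eq_iff by metis
  have "nz n A0 = A0" using out by (auto simp: A0_def nz_def fun_eq_iff)
  moreover have "\<forall>y. A0 m y = mid n m y" using Suc.prems sm by (auto simp: A0_def)
  moreover have "\<forall>x. s+1 \<le> x \<and> x < m \<longrightarrow> elem n x m (A0 x m) \<in> gen_group n S"
    using Suc.prems by (auto simp: A0_def)
  moreover have "m - (s+1) = k" using Suc.prems by auto
  ultimately obtain C where C: "C \<in> gen_group n S" "A0 = mmul n C (clr (s+1) m A0)"
    using Suc.IH[of "s+1" A0] Suc.prems by auto
  have cl: "clr (s+1) m A0 = clr s m A" using sm by (auto simp: clr_def A0_def fun_eq_iff)
  have e: "elem n s m (A s m) \<in> gen_group n S" using Suc.prems sm by auto
  show ?case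
    by (rule bexI[of _ "mmul n (elem n s m (A s m)) C"])
       (use eq C cl e in \<open>auto simp: mmul_assoc intro: gg_mult\<close>)
qed

lemma chr_rowm:
  assumes "chr n l m A" "m \<in> {1..n+1}"
  shows "\<forall>y. A m y = mid n m y"
proof
  fix y
  have d: "A m m = 1" and sp: "\<And>i j. i \<noteq> j \<Longrightarrow> A i j \<noteq> 0 \<Longrightarrow> l \<le> i \<and> i < j \<and> j \<le> m"
    using assms unfolding chr_def by blast+
  show "A m y = mid n m y"
  proof (cases "y = m")
    case True then show ?thesis using d assms(2) by (simp add: mid_def)
  next
    case False
    then have "A m y = 0" using sp[of m y] by (cases "A m y = 0") auto
    then show ?thesis using False by (simp add: mid_def)
  qed
qed

lemma chr_nz_out: "chr n l m A \<Longrightarrow> \<not> (x \<in> {1..n+1} \<and> y \<in> {1..n+1}) \<Longrightarrow> A x y = 0"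
  unfolding chr_def nz_def fun_eq_iff by metis

lemma chr_sp: "chr n l m A \<Longrightarrow> x \<noteq> y \<Longrightarrow> A x y \<noteq> 0 \<Longrightarrow> l \<le> x \<and> x < y \<and> y \<le> m"
  unfolding chr_def by blast

lemma chr_mid_eq:
  assumes "chr n l m A" "m \<le> l"
  shows "A = mid n"
proof (intro ext)
  fix x y
  show "A x y = mid n x y"
  proof (cases "x = y")
    case True
    then show ?thesis using assms chr_nz_out[OF assms(1), of x y] unfolding chr_def mid_def by auto
  next
    case False
    have "A x y = 0"
    proof (rule ccontr)
      assume "A x y \<noteq> 0"
      then show False using chr_sp[OF assms(1) False] assms(2) by linarith
    qed
    then show ?thesis using False by (simp add: mid_def)
  qed
qed

lemma chr_clr:
  assumes "chr n l (Suc k) A"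
  shows "chr n l k (clr l (Suc k) A)"
proof -
  have 1: "nz n (clr l (Suc k) A) = clr l (Suc k) A"
    using chr_nz_out[OF assms] by (auto simp: nz_def clr_def fun_eq_iff)
  have 2: "\<forall>i\<in>{1..n+1}. clr l (Suc k) A i i = 1" using assms unfolding chr_def clr_def by auto
  have 3: "l \<le> i \<and> i < j \<and> j \<le> k" if h: "i \<noteq> j \<and> clr l (Suc k) A i j \<noteq> 0" for i j
  proof -
    from h have a: "A i j \<noteq> 0" by (auto simp: clr_def split: if_splits)
    have b: "l \<le> i \<and> i < j \<and> j \<le> Suc k" using chr_sp[OF assms _ a] h by blast
    moreover have "j \<noteq> Suc k" using h b by (auto simp: clr_def)
    ultimately show ?thesis by auto
  qed
  have 4: "degree (clr l (Suc k) A i j) \<le> j - i" for i j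
    using assms unfolding chr_def clr_def by auto
  show ?thesis unfolding chr_def using 1 2 3 4 by blast
qed

locale blk =
  fixes n l m :: nat and S :: "('a::field) poly mat set"
  assumes l1: "1 \<le> l" and mn: "m \<le> n+1"
    and gens: "\<And>j a b. l \<le> j \<Longrightarrow> j+1 \<le> m \<Longrightarrow> elem n j (j+1) [:a,b:] \<in> S"
begin

lemma E1:
  assumes "l \<le> i" "i+1 \<le> m" "degree p \<le> 1"
  shows "elem n i (i+1) p \<in> gen_group n S"
proof -
  have "elem n i (i+1) [:coeff p 0, coeff p 1:] \<in> S" by (rule gens) fact+
  then have s: "elem n i (i+1) p \<in> S" using deg1_eq[OF assms(3)] by metis
  have "nz n (elem n i (i+1) p) = elem n i (i+1) p"
    using assms l1 mn by (intro nz_elem) auto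
  then show ?thesis using s by (intro gg_gen)
qed

lemma E: "l \<le> i \<Longrightarrow> i + Suc d \<le> m \<Longrightarrow> degree p \<le> Suc d \<Longrightarrow> elem n i (i + Suc d) p \<in> gen_group n S"
proof (induction d arbitrary: i p)
  case 0
  then show ?case using E1 by simp
next
  case (Suc d)
  obtain a q where pq: "p = pCons a q" by (rule pCons_cases)
  have dq: "degree q \<le> Suc d" using Suc.prems(3) pq by (auto split: if_splits)
  have p2: "p = [:0,1:] * q + [:a:]" unfolding pq by simp
  let ?j = "i + Suc (Suc d)"
  have rng: "i \<in> {1..n+1}" "?j \<in> {1..n+1}" "i+1 \<in> {1..n+1}" using Suc.prems l1 mn by auto
  have IH: "elem n (i+1) ?j r \<in> gen_group n S" if "degree r \<le> Suc d" for r
    using Suc.IH[of "i+1" r] Suc.prems that by simp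
  have e1: "elem n i (i+1) r \<in> gen_group n S" if "degree r \<le> 1" for r
    using E1[of i r] Suc.prems that by simp
  have c: "elem n i ?j (x * y) \<in> gen_group n S" if "degree x \<le> 1" "degree y \<le> Suc d" for x y
  proof -
    have eq: "elem n i ?j (x * y) = mmul n (elem n i (i+1) x) (mmul n (elem n (i+1) ?j y)
           (mmul n (elem n i (i+1) (-x)) (elem n (i+1) ?j (-y))))"
      by (rule elem_comm) (use rng in auto)
    show ?thesis unfolding eq using that by (intro gg_mult e1 IH) auto
  qed
  have "elem n i ?j p = mmul n (elem n i ?j ([:0,1:] * q)) (elem n i ?j ([:a:] * 1))"
    unfolding p2 using rng by (subst elem_add) auto
  moreover have "elem n i ?j ([:0,1:] * q) \<in> gen_group n S" by (rule c) (use dq in auto)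
  moreover have "elem n i ?j ([:a:] * 1) \<in> gen_group n S" by (rule c) auto
  ultimately show ?case by (metis gg_mult)
qed

lemma E': "l \<le> i \<Longrightarrow> i < j \<Longrightarrow> j \<le> m \<Longrightarrow> degree p \<le> j - i \<Longrightarrow> elem n i j p \<in> gen_group n S"
  using E[of i "j - i - 1" p] by simp



lemma blockgen: "m' \<le> m \<Longrightarrow> chr n l m' A \<Longrightarrow> A \<in> gen_group n S"
proof (induction m' arbitrary: A)
  case 0
  then have "A = mid n" by (intro chr_mid_eq[of n l 0]) auto
  then show ?case by (simp add: gen_one)
next
  case (Suc k)
  show ?case
  proof (cases "Suc k \<le> l")
    case True
    then have "A = mid n" using Suc.prems by (intro chr_mid_eq[of n l "Suc k"]) auto
    then show ?thesis by (simp add: gen_one)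
  next
    case False
    have rng: "Suc k \<in> {1..n+1}" using Suc.prems mn False by auto
    have ch: "chr n l (Suc k) A" by fact
    then have nzA: "nz n A = A" and dgr: "\<And>x y. degree (A x y) \<le> y - x" unfolding chr_def by blast+
    have "\<exists>C \<in> gen_group n S. A = mmul n C (clr l (Suc k) A)"
    proof (rule colstrip_aux[OF refl nzA rng chr_rowm[OF ch rng] l1], intro allI impI)
      fix x assume "l \<le> x \<and> x < Suc k"
      then show "elem n x (Suc k) (A x (Suc k)) \<in> gen_group n S"
        using Suc.prems dgr by (intro E') auto
    qed
    then obtain C where C: "C \<in> gen_group n S" "A = mmul n C (clr l (Suc k) A)" by blast
    have "clr l (Suc k) A \<in> gen_group n S" using Suc chr_clr[OF ch] by auto
    then show ?thesis using C gg_mult by metis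
  qed
qed

end

theorem lemma7p9:
  fixes n :: nat
  assumes "n \<ge> 2"
  shows "(\<exists>L::nat. \<forall>g \<in> (Ggrp n :: ('a::{finite,field}) poly mat set).
            \<exists>gs. length gs \<le> L \<and> (\<forall>x \<in> set gs. \<exists>i<n. x \<in> Ksub n i) \<and> g = mprod n gs)
       \<and> (\<forall>g \<in> (Ggrp n :: 'a poly mat set).
            \<exists>gs. length gs \<le> 2 + 4 * (n + 1) \<and> (\<forall>x \<in> set gs. \<exists>i<n. x \<in> Ksub n i)
                 \<and> g = mprod n gs)"
proof -
  let ?S0 = "{elem n j (j+1) [:a, b:] | j a b. j \<in> {1..n} - {0+1}} :: 'a poly mat set"
  let ?S1 = "{elem n j (j+1) [:a, b:] | j a b. j \<in> {1..n} - {(n-1)+1}} :: 'a poly mat set"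
  have K0: "Ksub n 0 = gen_group n ?S0" unfolding Ksub_def by (rule refl)
  have K1: "Ksub n (n-1) = gen_group n ?S1" unfolding Ksub_def by (rule refl)
  interpret B0: blk n 2 "n+1" ?S0
    by unfold_locales (auto, force)
  interpret B1: blk n 1 n ?S1
    using assms by unfold_locales (auto, force)
  have main: "\<exists>gs. length gs \<le> 2 + 4 * (n + 1) \<and> (\<forall>x \<in> set gs. \<exists>i<n. x \<in> Ksub n i)
                 \<and> g = mprod n gs" if g: "g \<in> (Ggrp n :: 'a poly mat set)" for g
  proof -
    have ch: "chr n 1 (n+1) g" using g unfolding Ggrp_def
      by (rule G_chr) force
    define c where "c = g 1 (n+1)"
    define g1 where "g1 = (\<lambda>x y. if x = 1 \<and> y = n+1 then 0 else g x y)"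
    have rng: "(1::nat) \<in> {1..n+1}" "n+1 \<in> {1..n+1}" "(2::nat) \<in> {1..n+1}" using assms by auto
    have nzg: "nz n g = g" using ch unfolding chr_def by blast
    have eq1: "g = mmul n (elem n 1 (n+1) c) g1" unfolding c_def g1_def
      by (rule strip1[OF nzg rng(1,2)]) (use assms chr_rowm[OF ch rng(2)] in auto)
    have nzg1: "nz n g1 = g1" using chr_nz_out[OF ch] by (auto simp: nz_def g1_def fun_eq_iff)
    have row1: "\<forall>y. g1 (n+1) y = mid n (n+1) y" using chr_rowm[OF ch rng(2)] assms by (simp add: g1_def)
    have dg: "\<And>x y. degree (g x y) \<le> y - x" using ch unfolding chr_def by blast
    have "\<exists>C \<in> gen_group n ?S0. g1 = mmul n C (clr 2 (n+1) g1)"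
    proof (rule colstrip_aux[OF refl nzg1 rng(2) row1], simp, intro allI impI)
      fix x assume "2 \<le> x \<and> x < n+1"
      then show "elem n x (n+1) (g1 x (n+1)) \<in> gen_group n ?S0"
        using dg[of x "n+1"] by (intro B0.E') (auto simp: g1_def)
    qed
    then obtain C where C: "C \<in> gen_group n ?S0" "g1 = mmul n C (clr 2 (n+1) g1)" by blast
    define B where "B = clr 2 (n+1) g1"
    have "B = clr 1 (Suc n) g" unfolding B_def clr_def g1_def using assms by (auto simp: fun_eq_iff)
    then have chB: "chr n 1 n B" using chr_clr[of n 1 n g] ch by simp
    have BK: "B \<in> gen_group n ?S1" using B1.blockgen[OF le_refl chB] .
    obtain a q where cq: "c = pCons a q" by (rule pCons_cases)
    have "degree c \<le> n" using dg[of 1 "n+1"] unfolding c_def by simp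
    then have dq: "degree q \<le> n - 1" using cq by (auto split: if_splits)
    have c2: "c = [:0,1:] * q + [:a:] * 1" unfolding cq by simp
    have ec: "elem n 1 (n+1) c = mmul n (elem n 1 (n+1) ([:0,1:]*q)) (elem n 1 (n+1) ([:a:]*1))"
      unfolding c2 using rng assms by (subst elem_add) auto
    have cm: "\<And>x y. elem n 1 (n+1) (x*y) = mmul n (elem n 1 2 x) (mmul n (elem n 2 (n+1) y)
               (mmul n (elem n 1 2 (-x)) (elem n 2 (n+1) (-y))))"
      by (rule elem_comm) (use rng assms in auto)
    let ?gs = "[elem n 1 2 [:0,1:], elem n 2 (n+1) q, elem n 1 2 (-[:0,1:]), elem n 2 (n+1) (-q),
                elem n 1 2 [:a:], elem n 2 (n+1) 1, elem n 1 2 (-[:a:]), elem n 2 (n+1) (-1), C, B]"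
    have "g = mmul n (mmul n (elem n 1 (n+1) ([:0,1:]*q)) (elem n 1 (n+1) ([:a:]*1))) (mmul n C B)"
      using eq1 ec C(2) unfolding B_def by simp
    also have "\<dots> = mprod n ?gs"
      unfolding cm[of "[:0,1:]" q] cm[of "[:a:]" 1] mprod_def
      by (simp add: mmul_assoc mmul_mid_right gg_nz[OF BK])
    finally have geq: "g = mprod n ?gs" .
    have m1: "elem n 1 2 p \<in> Ksub n (n-1)" if "degree p \<le> 1" for p :: "'a poly"
      using B1.E1[of 1 p] that assms unfolding K1 by (simp add: numeral_2_eq_2)
    have m0: "elem n 2 (n+1) p \<in> Ksub n 0" if "degree p \<le> n - 1" for p :: "'a poly"
      using B0.E'[of 2 "n+1" p] that assms unfolding K0 by simp
    have mem: "\<forall>x \<in> set ?gs. \<exists>i<n. x \<in> Ksub n i"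
    proof -
      have i0: "(0::nat) < n" "n - 1 < n" using assms by auto
      have "\<forall>x \<in> set ?gs. x \<in> Ksub n 0 \<or> x \<in> Ksub n (n-1)"
        using m1 m0 dq C(1) BK K0 K1 by simp
      then show ?thesis using i0 by blast
    qed
    show ?thesis
      by (rule exI[of _ ?gs]) (use geq mem in auto)
  qed
  then show ?thesis by blast
qed

end
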